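(* For integers $d \ge 0$ and $n \ge 0$, $$\mathcal{G}_{d,n} = \sum_{k=0}^d \binom{d}{k} \mathcal{I}_{k,n},$$ where $\mathcal{I}_{0,n} = \delta_{0,n}$ (equal to $1$ if $n=0$ and $0$ otherwise).
   Context: Let $X^{(1)}, X^{(2)}, \dots$ be i.i.d. random vectors uniformly distributed on $[0,1)^d$. For $x,y\in\mathbb{R}^d$, $x \prec y$ means $x_j<y_j$ for all $j$ and $x \le y$ means $x_j \le y_j$ for all $j$. After $n$ observations, the record-setting region is $S_n := \{x \in [0,1)^d : x \not\prec X^{(i)} \text{ for all } i \in [n]\}$ (with $S_0 = [0,1)^d$); its generators are the minimal elements of $S_n$ with respect to $\le$; a generator is interior if all of its coordinates are nonzero. $\mathcal{G}_{d,n}$ denotes the expected number of generators of $S_n$ and $\mathcal{I}_{d,n}$ the expected number of interior generators of $S_n$, for $d$-dimensional observations; $\mathcal{I}_{k,n}$ is the same quantity for $k$-dimensional observations. *)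

theory Defs
  imports "HOL-Probability.Probability"
begin

text \<open>Points of [0,1)^d are represented as extensional functions on {0..<d}
  (elements of PiE {0..<d} (\<lambda>_. {0..<1})). An observation sequence
  X^(1),...,X^(n) is a function X on {0..<n} (index i stands for X^(i+1)).\<close>

definition unit_cube :: "nat \<Rightarrow> (nat \<Rightarrow> real) set" where
  "unit_cube d = PiE {0..<d} (\<lambda>_. {0..<1})"

definition strict_dom :: "nat \<Rightarrow> (nat \<Rightarrow> real) \<Rightarrow> (nat \<Rightarrow> real) \<Rightarrow> bool" where
  "strict_dom d x y \<longleftrightarrow> (\<forall>j<d. x j < y j)"

definition weak_dom :: "nat \<Rightarrow> (nat \<Rightarrow> real) \<Rightarrow> (nat \<Rightarrow> real) \<Rightarrow> bool" where
  "weak_dom d x y \<longleftrightarrow> (\<forall>j<d. x j \<le> y j)"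

definition record_region :: "nat \<Rightarrow> nat \<Rightarrow> (nat \<Rightarrow> nat \<Rightarrow> real) \<Rightarrow> (nat \<Rightarrow> real) set" where
  "record_region d n X = {x \<in> unit_cube d. \<forall>i<n. \<not> strict_dom d x (X i)}"

definition generators :: "nat \<Rightarrow> nat \<Rightarrow> (nat \<Rightarrow> nat \<Rightarrow> real) \<Rightarrow> (nat \<Rightarrow> real) set" where
  "generators d n X = {x \<in> record_region d n X.
      \<forall>y \<in> record_region d n X. weak_dom d y x \<longrightarrow> y = x}"

definition interior_generators :: "nat \<Rightarrow> nat \<Rightarrow> (nat \<Rightarrow> nat \<Rightarrow> real) \<Rightarrow> (nat \<Rightarrow> real) set" where
  "interior_generators d n X = {x \<in> generators d n X. \<forall>j<d. x j \<noteq> 0}"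

definition obs_measure :: "nat \<Rightarrow> (nat \<Rightarrow> real) measure" where
  "obs_measure d = PiM {0..<d} (\<lambda>_. uniform_measure lborel {0..<1::real})"

definition sample_measure :: "nat \<Rightarrow> nat \<Rightarrow> (nat \<Rightarrow> nat \<Rightarrow> real) measure" where
  "sample_measure d n = PiM {0..<n} (\<lambda>_. obs_measure d)"

definition expected_generators :: "nat \<Rightarrow> nat \<Rightarrow> real" where
  "expected_generators d n =
     (\<integral>X. real (card (generators d n X)) \<partial>sample_measure d n)"

definition expected_interior_generators :: "nat \<Rightarrow> nat \<Rightarrow> real" where
  "expected_interior_generators d n =
     (\<integral>X. real (card (interior_generators d n X)) \<partial>sample_measure d n)"

end

theory Submission
  imports Defs
begin


abbreviation U :: "real measure" where "U \<equiv> uniform_measure lborel {0..<1::real}"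

lemma prob_U: "prob_space U"
  by (rule prob_space_uniform_measure) auto

lemma prob_obs: "prob_space (obs_measure d)"
  unfolding obs_measure_def by (intro prob_space_PiM prob_U)

lemma prob_sample: "prob_space (sample_measure d n)"
  unfolding sample_measure_def by (intro prob_space_PiM prob_obs)

lemma meas_comp[measurable]:
  assumes "i < n" "j < d"
  shows "(\<lambda>X. X i j) \<in> borel_measurable (sample_measure d n)"
proof -
  have 1: "(\<lambda>X. X i) \<in> measurable (sample_measure d n) (obs_measure d)"
    unfolding sample_measure_def using assms by (intro measurable_component_singleton) auto
  have 2: "(\<lambda>x. x j) \<in> measurable (obs_measure d) U"
    unfolding obs_measure_def using assms by (intro measurable_component_singleton) auto
  have 3: "(\<lambda>x. x j) \<in> borel_measurable (obs_measure d)"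
  proof -
    have "measurable (obs_measure d) U = measurable (obs_measure d) borel"
      by (rule measurable_cong_sets) auto
    with 2 show ?thesis by simp
  qed
  show ?thesis using measurable_comp[OF 1 3] by (simp add: o_def)
qed

lemma AE_pos: "AE X in sample_measure d n. \<forall>i<n. \<forall>j<d. 0 < X i j"
proof -
  have U0: "AE x in U. 0 < x"
    by (rule AE_uniform_measureI) (auto intro: AE_mp[OF AE_lborel_singleton[of 0]])
  have O: "AE x in obs_measure d. 0 < x j" if "j < d" for j
    unfolding obs_measure_def using that by (intro AE_PiM_component prob_U U0) auto
  have S: "AE X in sample_measure d n. 0 < X i j" if "i < n" "j < d" for i j
    unfolding sample_measure_def using that O
    by (intro AE_PiM_component[where P="\<lambda>x. 0 < x j"] prob_obs) (auto simp: sample_measure_def)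
  have "AE X in sample_measure d n. \<forall>i\<in>{..<n}. \<forall>j\<in>{..<d}. 0 < X i j"
    using S by (intro eventually_ball_finite ballI) auto
  then show ?thesis by (auto elim!: AE_mp)
qed



lemma gen_char:
  "x \<in> generators d n X \<longleftrightarrow> x \<in> record_region d n X \<and>
     (\<forall>j<d. x j \<noteq> 0 \<longrightarrow> (\<exists>i<n. x j = X i j \<and> (\<forall>l<d. l \<noteq> j \<longrightarrow> x l < X i l)))"
proof
  assume G: "x \<in> generators d n X"
  then have xR: "x \<in> record_region d n X" and min: "\<And>y. y \<in> record_region d n X \<Longrightarrow> weak_dom d y x \<Longrightarrow> y = x"
    by (auto simp: generators_def)
  have xc: "x \<in> unit_cube d" and nd: "\<And>i. i < n \<Longrightarrow> \<not> strict_dom d x (X i)"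
    using xR by (auto simp: record_region_def)
  show "x \<in> record_region d n X \<and> (\<forall>j<d. x j \<noteq> 0 \<longrightarrow> (\<exists>i<n. x j = X i j \<and> (\<forall>l<d. l \<noteq> j \<longrightarrow> x l < X i l)))"
  proof (intro conjI xR allI impI)
    fix j assume j: "j < d" and xj: "x j \<noteq> 0"
    show "\<exists>i<n. x j = X i j \<and> (\<forall>l<d. l \<noteq> j \<longrightarrow> x l < X i l)"
    proof (rule ccontr)
      assume H: "\<not> ?thesis"
      define T where "T = {i. i < n \<and> (\<forall>l<d. l \<noteq> j \<longrightarrow> x l < X i l)}"
      have xr: "0 \<le> x j" "x j < 1" using xc j by (auto simp: unit_cube_def PiE_iff)
      have Tlt: "X i j < x j" if "i \<in> T" for i
      proof -
        have "i < n" "\<forall>l<d. l \<noteq> j \<longrightarrow> x l < X i l" using that by (auto simp: T_def)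
        moreover have "x j \<noteq> X i j" using H calculation by auto
        moreover have "\<not> strict_dom d x (X i)" using nd calculation by auto
        ultimately show ?thesis unfolding strict_dom_def
          by (metis j linorder_neqE_linordered_idom not_less)
      qed
      define m where "m = Max (insert 0 ((\<lambda>i. X i j) ` T))"
      have finT: "finite T" by (auto simp: T_def)
      have m0: "0 \<le> m" unfolding m_def using finT by auto
      have mlt: "m < x j" unfolding m_def using finT Tlt xr xj by auto
      have mge: "X i j \<le> m" if "i \<in> T" for i unfolding m_def using finT that by auto
      define y where "y = x(j := m)"
      have yc: "y \<in> unit_cube d" using xc j m0 mlt xr
        unfolding y_def unit_cube_def using PiE_fun_upd[of m "\<lambda>_. {0..<1::real}" j x "{0..<d}"]
        by (simp add: insert_absorb)
      have yR: "y \<in> record_region d n X"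
        unfolding record_region_def
      proof (intro CollectI conjI yc allI impI)
        fix i assume i: "i < n"
        show "\<not> strict_dom d y (X i)"
        proof (cases "i \<in> T")
          case True then show ?thesis using mge[OF True] j by (auto simp: strict_dom_def y_def)
        next
          case False
          then obtain l where "l < d" "l \<noteq> j" "\<not> x l < X i l" using i by (auto simp: T_def)
          then show ?thesis by (auto simp: strict_dom_def y_def)
        qed
      qed
      have "weak_dom d y x" using mlt by (auto simp: weak_dom_def y_def)
      with min[OF yR] have "y = x" .
      then have "m = x j" unfolding y_def by (metis fun_upd_same)
      with mlt show False by simp
    qed
  qed
next
  assume A: "x \<in> record_region d n X \<and> (\<forall>j<d. x j \<noteq> 0 \<longrightarrow> (\<exists>i<n. x j = X i j \<and> (\<forall>l<d. l \<noteq> j \<longrightarrow> x l < X i l)))"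
  show "x \<in> generators d n X"
    unfolding generators_def
  proof (intro CollectI conjI ballI impI)
    show "x \<in> record_region d n X" using A by auto
    fix y assume yR: "y \<in> record_region d n X" and w: "weak_dom d y x"
    have yc: "y \<in> unit_cube d" and xc: "x \<in> unit_cube d" using yR A by (auto simp: record_region_def)
    show "y = x"
    proof (rule PiE_ext[OF yc[unfolded unit_cube_def] xc[unfolded unit_cube_def]])
      fix j assume "j \<in> {0..<d}"
      then have j: "j < d" by auto
      show "y j = x j"
      proof (rule ccontr)
        assume ne: "y j \<noteq> x j"
        with w j have lt: "y j < x j" by (auto simp: weak_dom_def)
        have "0 \<le> y j" using yc j by (auto simp: unit_cube_def PiE_iff)
        with lt have "x j \<noteq> 0" by auto
        with A j obtain i where i: "i < n" "x j = X i j" "\<forall>l<d. l \<noteq> j \<longrightarrow> x l < X i l" by blast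
        have "strict_dom d y (X i)" unfolding strict_dom_def
        proof (intro allI impI)
          fix l assume l: "l < d"
          show "y l < X i l"
          proof (cases "l = j")
            case True then show ?thesis using lt i by simp
          next
            case False then have "x l < X i l" using i l by auto
            moreover have "y l \<le> x l" using w l by (auto simp: weak_dom_def)
            ultimately show ?thesis by simp
          qed
        qed
        with yR i show False by (auto simp: record_region_def)
      qed
    qed
  qed
qed



definition cval :: "(nat \<Rightarrow> nat \<Rightarrow> real) \<Rightarrow> (nat \<Rightarrow> nat option) \<Rightarrow> nat \<Rightarrow> real" where
  "cval X c j = (case c j of None \<Rightarrow> 0 | Some i \<Rightarrow> X i j)"

definition pt :: "nat \<Rightarrow> (nat \<Rightarrow> nat \<Rightarrow> real) \<Rightarrow> (nat \<Rightarrow> nat option) \<Rightarrow> nat \<Rightarrow> real" where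
  "pt d X c = (\<lambda>j. if j < d then cval X c j else undefined)"

definition cands :: "nat \<Rightarrow> nat \<Rightarrow> (nat \<Rightarrow> nat option) set" where
  "cands d n = PiE {0..<d} (\<lambda>_. insert None (Some ` {0..<n}))"

definition gK :: "nat \<Rightarrow> nat \<Rightarrow> (nat \<Rightarrow> nat \<Rightarrow> real) \<Rightarrow> nat set \<Rightarrow> (nat \<Rightarrow> real) set" where
  "gK d n X K = {x \<in> generators d n X. \<forall>j<d. (x j \<noteq> 0) = (j \<in> K)}"

lemma finite_cands: "finite (cands d n)"
  unfolding cands_def by (intro finite_PiE) auto

lemma gen_sub: "generators d n X \<subseteq> pt d X ` cands d n"
proof
  fix x assume G: "x \<in> generators d n X"
  then have xc: "x \<in> unit_cube d" by (auto simp: generators_def record_region_def)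
  from G have ch: "\<forall>j<d. x j \<noteq> 0 \<longrightarrow> (\<exists>i<n. x j = X i j \<and> (\<forall>l<d. l \<noteq> j \<longrightarrow> x l < X i l))"
    by (simp add: gen_char)
  define c where "c = (\<lambda>j\<in>{0..<d}. if x j = 0 then None else Some (SOME i. i<n \<and> x j = X i j))"
  have c: "c \<in> cands d n"
  proof -
    have "(SOME i. i<n \<and> x j = X i j) < n" if "j < d" "x j \<noteq> 0" for j
      using someI_ex[of "\<lambda>i. i<n \<and> x j = X i j"] ch that by blast
    then show ?thesis by (auto simp: c_def cands_def PiE_iff)
  qed
  have "pt d X c = x"
  proof
    fix j show "pt d X c j = x j"
    proof (cases "j < d")
      case True
      show ?thesis
      proof (cases "x j = 0")
        case True with \<open>j<d\<close> show ?thesis by (simp add: pt_def cval_def c_def)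
      next
        case False
        then have "(SOME i. i<n \<and> x j = X i j) < n \<and> x j = X (SOME i. i<n \<and> x j = X i j) j"
          using someI_ex[of "\<lambda>i. i<n \<and> x j = X i j"] ch \<open>j<d\<close> by blast
        with False \<open>j<d\<close> show ?thesis by (simp add: pt_def cval_def c_def)
      qed
    next
      case False
      then show ?thesis using xc by (auto simp: pt_def unit_cube_def PiE_iff extensional_def)
    qed
  qed
  with c show "x \<in> pt d X ` cands d n" by blast
qed

lemma finite_gen: "finite (generators d n X)"
  using finite_subset[OF gen_sub finite_imageI[OF finite_cands]] .

lemma card_fibers:
  assumes "finite C" "A \<subseteq> P ` C"
  shows "real (card A) = (\<Sum>c\<in>C. if P c \<in> A then 1 / real (card {c'\<in>C. P c' = P c}) else 0)"
proof -
  have "(\<Sum>c\<in>C. if P c \<in> A then 1 / real (card {c'\<in>C. P c' = P c}) else 0)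
      = (\<Sum>y\<in>P ` C. \<Sum>c\<in>{c\<in>C. P c = y}. if P c \<in> A then 1 / real (card {c'\<in>C. P c' = P c}) else 0)"
    using assms by (intro sum.group[symmetric]) auto
  also have "\<dots> = (\<Sum>y\<in>P ` C. if y \<in> A then 1 else 0)"
  proof (rule sum.cong[OF refl])
    fix y assume y: "y \<in> P ` C"
    have ne: "card {c\<in>C. P c = y} \<noteq> 0" using y assms(1) by (auto simp: card_eq_0_iff)
    have "(\<Sum>c\<in>{c\<in>C. P c = y}. if P c \<in> A then 1 / real (card {c'\<in>C. P c' = P c}) else 0)
        = (\<Sum>c\<in>{c\<in>C. P c = y}. if y \<in> A then 1 / real (card {c'\<in>C. P c' = y}) else 0)"
      by (rule sum.cong) auto
    also have "\<dots> = (if y \<in> A then 1 else 0)" using ne by simp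
    finally show "(\<Sum>c\<in>{c\<in>C. P c = y}. if P c \<in> A then 1 / real (card {c'\<in>C. P c' = P c}) else 0) = (if y \<in> A then 1 else 0)" .
  qed
  also have "\<dots> = real (card (P ` C \<inter> A))"
    using assms(1) by (simp add: sum.If_cases)
  also have "P ` C \<inter> A = A" using assms(2) by auto
  finally show ?thesis ..
qed



definition PR :: "nat \<Rightarrow> nat \<Rightarrow> nat set \<Rightarrow> (nat \<Rightarrow> nat \<Rightarrow> real) \<Rightarrow> (nat \<Rightarrow> nat option) \<Rightarrow> bool" where
  "PR d n K X c \<longleftrightarrow> (\<forall>j\<in>{0..<d}. 0 \<le> cval X c j \<and> cval X c j < 1)
     \<and> (\<forall>i\<in>{0..<n}. \<exists>j\<in>{0..<d}. X i j \<le> cval X c j)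
     \<and> (\<forall>j\<in>{0..<d}. cval X c j \<noteq> 0 \<longrightarrow> (\<exists>i\<in>{0..<n}. cval X c j = X i j \<and> (\<forall>l\<in>{0..<d}. l \<noteq> j \<longrightarrow> cval X c l < X i l)))
     \<and> (\<forall>j\<in>{0..<d}. (cval X c j \<noteq> 0) = (j \<in> K))"

lemma pt_mem: "pt d X c \<in> gK d n X K \<longleftrightarrow> PR d n K X c"
proof -
  have cube: "pt d X c \<in> unit_cube d \<longleftrightarrow> (\<forall>j\<in>{0..<d}. 0 \<le> cval X c j \<and> cval X c j < 1)"
    by (auto simp: unit_cube_def PiE_iff pt_def extensional_def)
  have sd: "\<not> strict_dom d (pt d X c) (X i) \<longleftrightarrow> (\<exists>j\<in>{0..<d}. X i j \<le> cval X c j)" for i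
    by (auto simp: strict_dom_def pt_def not_less)
  show ?thesis
    unfolding gK_def mem_Collect_eq gen_char record_region_def mem_Collect_eq cube sd PR_def
    by (auto simp: pt_def atLeast0LessThan Ball_def Bex_def)
qed

lemma pt_eq: "pt d X c' = pt d X c \<longleftrightarrow> (\<forall>j\<in>{0..<d}. cval X c' j = cval X c j)"
  by (auto simp: pt_def fun_eq_iff)

definition cardK :: "nat \<Rightarrow> nat \<Rightarrow> nat set \<Rightarrow> (nat \<Rightarrow> nat \<Rightarrow> real) \<Rightarrow> real" where
  "cardK d n K X = (\<Sum>c\<in>cands d n. if PR d n K X c then
      1 / (\<Sum>c'\<in>cands d n. if (\<forall>j\<in>{0..<d}. cval X c' j = cval X c j) then 1 else 0) else 0)"

lemma card_gK: "real (card (gK d n X K)) = cardK d n K X"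
proof -
  have sub: "gK d n X K \<subseteq> pt d X ` cands d n" using gen_sub[of d n X] by (auto simp: gK_def)
  have cnt: "real (card {c'\<in>cands d n. pt d X c' = pt d X c}) =
      (\<Sum>c'\<in>cands d n. if (\<forall>j\<in>{0..<d}. cval X c' j = cval X c j) then 1 else 0)" for c
    using finite_cands[of d n] by (simp add: pt_eq sum.If_cases Int_def)
  show ?thesis
    unfolding card_fibers[OF finite_cands sub] cardK_def cnt pt_mem ..
qed

lemma meas_cval[measurable]:
  assumes "c \<in> cands d n" "j \<in> {0..<d}"
  shows "(\<lambda>X. cval X c j) \<in> borel_measurable (sample_measure d n)"
proof (cases "c j")
  case None then show ?thesis by (simp add: cval_def)
next
  case (Some i)
  with assms have "i < n" "j < d" by (force simp: cands_def PiE_iff)+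
  with Some show ?thesis by (simp add: cval_def meas_comp)
qed

lemma meas_comp'[measurable]:
  assumes "i \<in> {0..<n}" "j \<in> {0..<d}"
  shows "(\<lambda>X. X i j) \<in> borel_measurable (sample_measure d n)"
  using assms meas_comp by auto

lemma pB:
  fixes f g :: "'a \<Rightarrow> real"
  assumes "f \<in> borel_measurable M" "g \<in> borel_measurable M"
  shows "Measurable.pred M (\<lambda>x. f x = g x)" "Measurable.pred M (\<lambda>x. f x \<le> g x)" "Measurable.pred M (\<lambda>x. f x < g x)"
  using assms unfolding pred_def by (auto intro: borel_measurable_eq borel_measurable_le borel_measurable_less)

lemma pK: "Measurable.pred M (\<lambda>x. K)"
  by (cases K) auto

lemma pAll: "finite I \<Longrightarrow> (\<And>i. i \<in> I \<Longrightarrow> Measurable.pred M (\<lambda>x. P x i)) \<Longrightarrow> Measurable.pred M (\<lambda>x. \<forall>i\<in>I. P x i)"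
  by (rule pred_intros_finite(3))

lemma pEx: "finite I \<Longrightarrow> (\<And>i. i \<in> I \<Longrightarrow> Measurable.pred M (\<lambda>x. P x i)) \<Longrightarrow> Measurable.pred M (\<lambda>x. \<exists>i\<in>I. P x i)"
  by (rule pred_intros_finite(4))

lemma pConj: "Measurable.pred M P \<Longrightarrow> Measurable.pred M Q \<Longrightarrow> Measurable.pred M (\<lambda>x. P x \<and> Q x)"
  by (rule pred_intros_logic(3))
lemma pImp: "Measurable.pred M P \<Longrightarrow> Measurable.pred M Q \<Longrightarrow> Measurable.pred M (\<lambda>x. P x \<longrightarrow> Q x)"
  by (rule pred_intros_logic(4))
lemma pIff: "Measurable.pred M P \<Longrightarrow> Measurable.pred M Q \<Longrightarrow> Measurable.pred M (\<lambda>x. P x = Q x)"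
  by (rule pred_intros_logic(6))
lemma pNot: "Measurable.pred M P \<Longrightarrow> Measurable.pred M (\<lambda>x. \<not> P x)"
  by (rule pred_intros_logic(2))

lemma meas_PR:
  assumes c: "c \<in> cands d n"
  shows "Measurable.pred (sample_measure d n) (\<lambda>X. PR d n K X c)"
proof -
  let ?M = "sample_measure d n"
  have cv: "\<And>j. j \<in> {0..<d} \<Longrightarrow> (\<lambda>X. cval X c j) \<in> borel_measurable ?M"
    using meas_cval c by auto
  have cp: "\<And>i j. i \<in> {0..<n} \<Longrightarrow> j \<in> {0..<d} \<Longrightarrow> (\<lambda>X. X i j) \<in> borel_measurable ?M"
    using meas_comp' by auto
  have k0: "(\<lambda>X. 0::real) \<in> borel_measurable ?M" "(\<lambda>X. 1::real) \<in> borel_measurable ?M" by auto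
  show ?thesis unfolding PR_def
    by (intro pConj pAll pEx pImp pIff pNot pK finite_atLeastLessThan pB cv cp k0)
qed

lemma meas_cardK[measurable]: "cardK d n K \<in> borel_measurable (sample_measure d n)"
proof -
  let ?M = "sample_measure d n"
  have eqp: "Measurable.pred ?M (\<lambda>X. \<forall>j\<in>{0..<d}. cval X c' j = cval X c j)"
    if "c \<in> cands d n" "c' \<in> cands d n" for c c'
    using that by (intro pAll finite_atLeastLessThan pB meas_cval)
  show ?thesis unfolding cardK_def
    by (intro borel_measurable_sum measurable_If borel_measurable_divide borel_measurable_const meas_PR[unfolded Measurable.pred_def] eqp[unfolded Measurable.pred_def])
      auto
qed



lemma gK_iff:
  "x \<in> gK d n X K \<longleftrightarrow> x \<in> PiE {0..<d} (\<lambda>_. {0..<1}) \<and> (\<forall>i<n. \<exists>j<d. X i j \<le> x j)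
     \<and> (\<forall>j<d. x j \<noteq> 0 \<longrightarrow> (\<exists>i<n. x j = X i j \<and> (\<forall>l<d. l \<noteq> j \<longrightarrow> x l < X i l)))
     \<and> (\<forall>j<d. (x j \<noteq> 0) = (j \<in> K))"
  unfolding gK_def mem_Collect_eq gen_char record_region_def unit_cube_def strict_dom_def
  by (auto simp: not_less)

definition Ymap :: "nat \<Rightarrow> nat \<Rightarrow> (nat \<Rightarrow> nat) \<Rightarrow> (nat \<Rightarrow> real) \<Rightarrow> (nat \<Rightarrow> real)" where
  "Ymap k d e = (\<lambda>x. \<lambda>l\<in>{0..<k}. x (e l))"

lemma card_gK_proj:
  assumes e: "bij_betw e {0..<k} K" and Kd: "K \<subseteq> {0..<d}"
    and pos: "\<forall>i<n. \<forall>j<d. 0 < X i j"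
  shows "card (gK d n X K) = card (gK k n (\<lambda>i. Ymap k d e (X i)) {0..<k})"
proof -
  define Y where "Y = (\<lambda>i. Ymap k d e (X i))"
  have Y: "\<And>i l. l < k \<Longrightarrow> Y i l = X i (e l)" by (simp add: Y_def Ymap_def)
  have eK: "\<And>l. l < k \<Longrightarrow> e l \<in> K" using e by (auto simp: bij_betw_def)
  have ed: "\<And>l. l < k \<Longrightarrow> e l < d" using eK Kd by fastforce
  have einj: "\<And>l l'. l < k \<Longrightarrow> l' < k \<Longrightarrow> e l = e l' \<Longrightarrow> l = l'"
    using e by (auto simp: bij_betw_def inj_on_def)
  define inv where "inv = the_inv_into {0..<k} e"
  have inv1: "\<And>j. j \<in> K \<Longrightarrow> inv j < k \<and> e (inv j) = j"
    using e unfolding inv_def bij_betw_def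
    by (metis atLeastLessThan_iff f_the_inv_into_f the_inv_into_into subset_refl)
  have inv2: "\<And>l. l < k \<Longrightarrow> inv (e l) = l"
    using e unfolding inv_def bij_betw_def by (auto intro: the_inv_into_f_f)
  let ?r = "\<lambda>x. \<lambda>l\<in>{0..<k}. x (e l)"
  define exz where "exz = ((\<lambda>z::nat\<Rightarrow>real. \<lambda>j. if j < d then (if j \<in> K then z (inv j) else 0) else undefined))"
  have P1: "?r x \<in> gK k n Y {0..<k}" if x: "x \<in> gK d n X K" for x
  proof -
    note xx = x[unfolded gK_iff]
    show ?thesis unfolding gK_iff
    proof (intro conjI allI impI)
      show "?r x \<in> PiE {0..<k} (\<lambda>_. {0..<1})" using xx ed by (auto simp: PiE_iff)
    next
      fix i assume i: "i < n"
      then obtain j where j: "j < d" "X i j \<le> x j" using xx by blast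
      have "j \<in> K"
      proof (rule ccontr)
        assume "j \<notin> K" then have "x j = 0" using xx j by auto
        with j pos i show False by force
      qed
      then show "\<exists>l<k. Y i l \<le> ?r x l" using inv1[of j] j Y by (intro exI[of _ "inv j"]) auto
    next
      fix l assume l: "l < k" and nz: "?r x l \<noteq> 0"
      then have nz': "x (e l) \<noteq> 0" by simp
      obtain i where i: "i < n" "x (e l) = X i (e l)" "\<forall>l'<d. l' \<noteq> e l \<longrightarrow> x l' < X i l'"
        using xx ed[OF l] nz' by blast
      show "\<exists>i<n. ?r x l = Y i l \<and> (\<forall>l'<k. l' \<noteq> l \<longrightarrow> ?r x l' < Y i l')"
      proof (intro exI[of _ i] conjI allI impI)
        show "i < n" by fact
        show "?r x l = Y i l" using i l Y by simp
        fix l' assume l': "l' < k" "l' \<noteq> l"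
        then have "e l' \<noteq> e l" using einj l by blast
        then have "x (e l') < X i (e l')" using i ed[OF l'(1)] by blast
        then show "?r x l' < Y i l'" using l' Y by simp
      qed
    next
      fix l assume l: "l < k"
      show "(?r x l \<noteq> 0) = (l \<in> {0..<k})" using l xx eK ed by auto
    qed
  qed
  have P2: "exz z \<in> gK d n X K \<and> ?r (exz z) = z" if z: "z \<in> gK k n Y {0..<k}" for z
  proof -
    note zz = z[unfolded gK_iff]
    have ez: "\<And>l. l < k \<Longrightarrow> exz z (e l) = z l" using ed eK inv2 by (simp add: exz_def)
    have A: "exz z \<in> gK d n X K" unfolding gK_iff
    proof (intro conjI allI impI)
      show "exz z \<in> PiE {0..<d} (\<lambda>_. {0..<1})" using zz inv1 by (auto simp: PiE_iff exz_def extensional_def)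
    next
      fix i assume i: "i < n"
      then obtain l where l: "l < k" "Y i l \<le> z l" using zz by blast
      then show "\<exists>j<d. X i j \<le> exz z j" using ez Y ed by (intro exI[of _ "e l"]) auto
    next
      fix j assume j: "j < d" and nz: "exz z j \<noteq> 0"
      then have jK: "j \<in> K" by (auto simp: exz_def split: if_splits)
      obtain l where l: "l < k" "e l = j" using inv1[OF jK] by blast
      obtain i where i: "i < n" "z l = Y i l" "\<forall>l'<k. l' \<noteq> l \<longrightarrow> z l' < Y i l'"
        using zz l by auto
      show "\<exists>i<n. exz z j = X i j \<and> (\<forall>l<d. l \<noteq> j \<longrightarrow> exz z l < X i l)"
      proof (intro exI[of _ i] conjI allI impI)
        show "i < n" by fact
        show "exz z j = X i j" using ez l i Y by auto
        fix j' assume j': "j' < d" "j' \<noteq> j"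
        show "exz z j' < X i j'"
        proof (cases "j' \<in> K")
          case True
          then obtain l' where l': "l' < k" "e l' = j'" using inv1 by blast
          then have "l' \<noteq> l" using j' l by auto
          then show ?thesis using i l' ez Y by auto
        next
          case False then show ?thesis using j' pos i by (auto simp: exz_def)
        qed
      qed
    next
      fix j assume j: "j < d"
      show "(exz z j \<noteq> 0) = (j \<in> K)" using zz inv1 j by (auto simp: exz_def)
    qed
    have B: "?r (exz z) = z"
    proof
      fix l show "?r (exz z) l = z l"
        using ez zz by (cases "l < k") (auto simp: PiE_iff extensional_def)
    qed
    from A B show ?thesis by blast
  qed
  have inj: "inj_on ?r (gK d n X K)"
  proof (rule inj_onI)
    fix x x' assume x: "x \<in> gK d n X K" and x': "x' \<in> gK d n X K" and eq: "?r x = ?r x'"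
    note xx = x[unfolded gK_iff] and xx' = x'[unfolded gK_iff]
    show "x = x'"
    proof
      fix j show "x j = x' j"
      proof (cases "j < d")
        case True
        show ?thesis
        proof (cases "j \<in> K")
          case jK: True
          then obtain l where l: "l < k" "e l = j" using inv1 by blast
          have "?r x l = ?r x' l" using eq by simp
          then show ?thesis using l by simp
        next
          case False then show ?thesis using xx xx' True by auto
        qed
      next
        case False then show ?thesis using xx xx' by (auto simp: PiE_iff extensional_def)
      qed
    qed
  qed
  have img: "?r ` gK d n X K = gK k n Y {0..<k}"
  proof
    show "?r ` gK d n X K \<subseteq> gK k n Y {0..<k}" using P1 by auto
    show "gK k n Y {0..<k} \<subseteq> ?r ` gK d n X K"
    proof
      fix z assume "z \<in> gK k n Y {0..<k}"
      with P2[OF this] show "z \<in> ?r ` gK d n X K" by (metis image_eqI)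
    qed
  qed
  show ?thesis using card_image[OF inj] img by (simp add: Y_def)
qed



lemma int_eq: "interior_generators k n X = gK k n X {0..<k}"
  by (auto simp: gK_def interior_generators_def)

lemma gK_cong: "(\<And>i. i < n \<Longrightarrow> X i = X' i) \<Longrightarrow> gK d n X K = gK d n X' K"
proof -
  assume h: "\<And>i. i < n \<Longrightarrow> X i = X' i"
  have "(\<forall>i<n. \<exists>j<d. X i j \<le> x j) = (\<forall>i<n. \<exists>j<d. X' i j \<le> x j)" for x
    using h by simp
  moreover have "(\<forall>j<d. x j \<noteq> 0 \<longrightarrow> (\<exists>i<n. x j = X i j \<and> (\<forall>l<d. l \<noteq> j \<longrightarrow> x l < X i l)))
      = (\<forall>j<d. x j \<noteq> 0 \<longrightarrow> (\<exists>i<n. x j = X' i j \<and> (\<forall>l<d. l \<noteq> j \<longrightarrow> x l < X' i l)))" for x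
    using h by (metis (no_types, lifting))
  ultimately show ?thesis unfolding gK_iff set_eq_iff by simp
qed

lemma gen_split: "real (card (generators d n X)) = (\<Sum>K\<in>Pow {0..<d}. real (card (gK d n X K)))"
proof -
  have eq: "generators d n X = (\<Union>K\<in>Pow {0..<d}. gK d n X K)"
  proof
    show "generators d n X \<subseteq> (\<Union>K\<in>Pow {0..<d}. gK d n X K)"
    proof
      fix x assume "x \<in> generators d n X"
      then have "x \<in> gK d n X {j\<in>{0..<d}. x j \<noteq> 0}" by (simp add: gK_def)
      moreover have "{j\<in>{0..<d}. x j \<noteq> 0} \<in> Pow {0..<d}" by blast
      ultimately show "x \<in> (\<Union>K\<in>Pow {0..<d}. gK d n X K)" by blast
    qed
    show "(\<Union>K\<in>Pow {0..<d}. gK d n X K) \<subseteq> generators d n X" unfolding gK_def by blast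
  qed
  have "card (generators d n X) = (\<Sum>K\<in>Pow {0..<d}. card (gK d n X K))"
    unfolding eq
  proof (rule card_UN_disjoint)
    show "finite (Pow {0..<d::nat})" by simp
    show "\<forall>K\<in>Pow {0..<d}. finite (gK d n X K)"
      using finite_gen[of d n X] by (auto simp: gK_def intro: finite_subset)
    show "\<forall>K\<in>Pow {0..<d}. \<forall>K'\<in>Pow {0..<d}. K \<noteq> K' \<longrightarrow> gK d n X K \<inter> gK d n X K' = {}"
    proof (intro ballI impI)
      fix K K' assume K: "K \<in> Pow {0..<d}" and K': "K' \<in> Pow {0..<d}" and ne: "K \<noteq> K'"
      show "gK d n X K \<inter> gK d n X K' = {}"
      proof (rule ccontr)
        assume "gK d n X K \<inter> gK d n X K' \<noteq> {}"
        then obtain x :: "nat \<Rightarrow> real" where x1: "\<forall>j<d. (x j \<noteq> 0) = (j \<in> K)" and x2: "\<forall>j<d. (x j \<noteq> 0) = (j \<in> K')"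
          unfolding gK_def by blast
        have "K = K'"
        proof (intro set_eqI iffI)
          fix j assume "j \<in> K" then show "j \<in> K'" using K x1 x2 by auto
        next
          fix j assume "j \<in> K'" then show "j \<in> K" using K' x1 x2 by auto
        qed
        with ne show False ..
      qed
    qed
  qed
  then show ?thesis by simp
qed

lemma card_gK_le: "card (gK d n X K) \<le> card (cands d n)"
proof -
  have "gK d n X K \<subseteq> pt d X ` cands d n" using gen_sub[of d n X] by (auto simp: gK_def)
  then have "card (gK d n X K) \<le> card (pt d X ` cands d n)"
    by (intro card_mono finite_imageI finite_cands)
  also have "\<dots> \<le> card (cands d n)" by (rule card_image_le[OF finite_cands])
  finally show ?thesis .
qed

lemma integrable_gK: "integrable (sample_measure d n) (\<lambda>X. real (card (gK d n X K)))"
proof -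
  interpret prob_space "sample_measure d n" by (rule prob_sample)
  show ?thesis
  proof (rule integrable_const_bound[where B="real (card (cands d n))"])
    show "AE X in sample_measure d n. norm (real (card (gK d n X K))) \<le> real (card (cands d n))"
      by (intro AE_I2) (simp add: card_gK_le)
    show "(\<lambda>X. real (card (gK d n X K))) \<in> borel_measurable (sample_measure d n)"
      unfolding card_gK by (rule meas_cardK)
  qed
qed

lemma expect_K:
  assumes Kd: "K \<subseteq> {0..<d}"
  shows "(\<integral>X. real (card (gK d n X K)) \<partial>sample_measure d n) = expected_interior_generators (card K) n"
proof -
  define k where "k = card K"
  have "finite K" using Kd finite_subset by blast
  then obtain e where e: "bij_betw e {0..<k} K" unfolding k_def using ex_bij_betw_nat_finite by blast
  have ed: "e \<in> {0..<k} \<rightarrow> {0..<d}" using e Kd by (auto simp: bij_betw_def)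
  have einj: "inj_on e {0..<k}" using e by (auto simp: bij_betw_def)
  define R where "R = Ymap k d e"
  define Yf where "Yf = (\<lambda>X. \<lambda>i\<in>{0..<n}. R (X i))"
  have Rm: "R \<in> measurable (obs_measure d) (obs_measure k)"
    unfolding R_def Ymap_def obs_measure_def
    by (intro measurable_restrict measurable_component_singleton) (use ed in auto)
  have Rd: "distr (obs_measure d) (obs_measure k) R = obs_measure k"
    unfolding R_def Ymap_def obs_measure_def
    using distr_PiM_reindex[of "{0..<d}" "\<lambda>_. U" e "{0..<k}", OF prob_U einj ed] by simp
  have Ym: "Yf \<in> measurable (sample_measure d n) (sample_measure k n)"
    unfolding Yf_def sample_measure_def
  proof (intro measurable_restrict)
    fix i :: nat assume "i \<in> {0..<n}"
    then show "(\<lambda>X. R (X i)) \<in> measurable (PiM {0..<n} (\<lambda>_. obs_measure d)) (obs_measure k)"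
      using measurable_comp[OF measurable_component_singleton[of i "{0..<n}" "\<lambda>_. obs_measure d"] Rm]
      by (simp add: o_def)
  qed
  have Yd: "distr (sample_measure d n) (sample_measure k n) Yf = sample_measure k n"
  proof -
    have "distr (sample_measure d n) (sample_measure k n) (compose {0..<n} R) =
        PiM {0..<n} (\<lambda>i. distr (obs_measure d) (obs_measure k) R)"
      unfolding sample_measure_def
      by (rule distr_PiM_finite_prob_space') (auto intro: prob_obs Rm)
    moreover have "compose {0..<n} R = Yf" by (auto simp: compose_def Yf_def)
    ultimately show ?thesis by (simp add: Rd sample_measure_def)
  qed
  have "(\<integral>X. real (card (gK d n X K)) \<partial>sample_measure d n)
      = (\<integral>X. cardK k n {0..<k} (Yf X) \<partial>sample_measure d n)"
  proof (rule integral_cong_AE)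
    show "(\<lambda>X. real (card (gK d n X K))) \<in> borel_measurable (sample_measure d n)"
      by (simp add: card_gK)
    show "(\<lambda>X. cardK k n {0..<k} (Yf X)) \<in> borel_measurable (sample_measure d n)"
      using measurable_comp[OF Ym meas_cardK] by (simp add: o_def)
    show "AE X in sample_measure d n. real (card (gK d n X K)) = cardK k n {0..<k} (Yf X)"
      using AE_pos[where d=d and n=n]
    proof (rule AE_mp, intro AE_I2 impI)
      fix X :: "nat \<Rightarrow> nat \<Rightarrow> real" assume pos: "\<forall>i<n. \<forall>j<d. 0 < X i j"
      have "card (gK d n X K) = card (gK k n (\<lambda>i. Ymap k d e (X i)) {0..<k})"
        by (rule card_gK_proj[OF e Kd pos])
      also have "gK k n (\<lambda>i. Ymap k d e (X i)) {0..<k} = gK k n (Yf X) {0..<k}"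
        by (rule gK_cong) (simp add: Yf_def R_def)
      finally show "real (card (gK d n X K)) = cardK k n {0..<k} (Yf X)" by (simp add: card_gK)
    qed
  qed
  also have "\<dots> = (\<integral>Z. cardK k n {0..<k} Z \<partial>distr (sample_measure d n) (sample_measure k n) Yf)"
    by (rule integral_distr[symmetric, OF Ym meas_cardK])
  also have "\<dots> = expected_interior_generators k n"
    unfolding Yd expected_interior_generators_def int_eq card_gK ..
  finally show ?thesis unfolding k_def .
qed

lemma part0: "expected_interior_generators 0 n = (if n = 0 then 1 else 0)"
proof -
  have uc: "unit_cube 0 = {\<lambda>_. undefined}" by (simp add: unit_cube_def)
  have "interior_generators 0 n X = (if n = 0 then {\<lambda>_. undefined} else {})" for X
    by (auto simp: interior_generators_def generators_def record_region_def uc strict_dom_def weak_dom_def)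
  then have c: "real (card (interior_generators 0 n X)) = (if n = 0 then 1 else 0)" for X by simp
  interpret prob_space "sample_measure 0 n" by (rule prob_sample)
  show ?thesis unfolding expected_interior_generators_def c by (simp add: prob_space)
qed

theorem lemmaL:
  fixes d n :: nat
  shows "expected_interior_generators 0 n = (if n = 0 then 1 else 0)
     \<and> expected_generators d n =
         (\<Sum>k=0..d. real (d choose k) * expected_interior_generators k n)"
proof
  show "expected_interior_generators 0 n = (if n = 0 then 1 else 0)" by (rule part0)
  have "expected_generators d n = (\<integral>X. (\<Sum>K\<in>Pow {0..<d}. real (card (gK d n X K))) \<partial>sample_measure d n)"
    unfolding expected_generators_def gen_split ..
  also have "\<dots> = (\<Sum>K\<in>Pow {0..<d}. \<integral>X. real (card (gK d n X K)) \<partial>sample_measure d n)"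
    by (rule Bochner_Integration.integral_sum[where I="Pow {0..<d}" and M="sample_measure d n" and f="\<lambda>K X. real (card (gK d n X K))"]) (rule integrable_gK)
  also have "\<dots> = (\<Sum>K\<in>Pow {0..<d}. expected_interior_generators (card K) n)"
    by (rule sum.cong) (auto intro: expect_K)
  also have "\<dots> = (\<Sum>k\<in>{0..d}. \<Sum>K\<in>{K\<in>Pow {0..<d}. card K = k}. expected_interior_generators (card K) n)"
    by (rule sum.group[symmetric]) (auto intro: card_mono[of "{0..<d}", simplified])
  also have "\<dots> = (\<Sum>k=0..d. real (d choose k) * expected_interior_generators k n)"
  proof (rule sum.cong[OF refl])
    fix k assume "k \<in> {0..d}"
    have "(\<Sum>K\<in>{K\<in>Pow {0..<d}. card K = k}. expected_interior_generators (card K) n)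
        = (\<Sum>K\<in>{K\<in>Pow {0..<d}. card K = k}. expected_interior_generators k n)"
      by (rule sum.cong) auto
    also have "\<dots> = real (d choose k) * expected_interior_generators k n"
      by (simp add: binomial_def)
    finally show "(\<Sum>K\<in>{K\<in>Pow {0..<d}. card K = k}. expected_interior_generators (card K) n) = real (d choose k) * expected_interior_generators k n" .
  qed
  finally show "expected_generators d n = (\<Sum>k=0..d. real (d choose k) * expected_interior_generators k n)" .
qed

end
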